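(* Let $(\gamma_{n})_{n\in\mathbb{N}}$ be nonnegative integrable functions on $[0,\infty)$ with $\rho:=\sup_{n\in\mathbb{N}}\int_{0}^{\infty}\gamma_{n}(t)dt<1$, let $a(t)>0$ with $a(t)/t\to0$, and let $G_{n}(t,\theta,M)$, $C_{n}^{1}(s,M)$, $C_{n}^{2}(s,M)$ be as defined in the context. Fix $\theta\in\mathbb{R}$ and let $k_{1}\ge\frac{1}{1-\rho}$ be a constant such that for all sufficiently large $t$, $|G_{n}(s,\frac{a(t)}{t}\theta,M)|\le k_{1}\frac{a(t)}{t}|\theta|$ uniformly in $1\le n\le M$, $M\in\mathbb{N}$, $s\ge0$. Let $$k_{2}:=\frac{4\left[\frac{\rho}{2(1-\rho)^{3}}\left[k_{1}+\frac{1}{1-\rho}\right]+\rho k_{1}^{3}\right]}{(4-\rho)(1-\rho)}.$$ Then for all sufficiently large $t$ such that $k_{1}\frac{a(t)}{t}|\theta|\le\frac{1-\rho}{4}$, $$\left|G_{n}\left(s,\tfrac{a(t)}{t}\theta,M\right)-C_{n}^{1}(s,M)\tfrac{a(t)}{t}\theta-C_{n}^{2}(s,M)\left(\tfrac{a(t)}{t}\theta\right)^{2}\right|\le k_{2}\left[\tfrac{a(t)}{t}|\theta|\right]^{3},$$ uniformly in $1\le n\le M$, $M\in\mathbb{N}$, $s\ge0$.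
   Context: For $M\in\mathbb{N}$, $\theta\in\mathbb{R}$, $t\ge0$: $G_{M}(t,\theta,M)=\theta$ and for $0\le n\le M-1$, $G_{n}(t,\theta,M)=\theta+\int_{0}^{t}(e^{G_{n+1}(t-s,\theta,M)}-1)\gamma_{n}(s)ds$. Also $C_{M}^{1}(s,M)=1$, $C_{M}^{2}(s,M)=0$, and for $1\le n<M$: $C_{n}^{1}(s,M)=1+\int_{0}^{s}C_{n+1}^{1}(s-r,M)\gamma_{n}(r)dr$, $C_{n}^{2}(s,M)=\int_{0}^{s}\left(C_{n+1}^{2}(s-r,M)+\frac12[C_{n+1}^{1}(s-r,M)]^{2}\right)\gamma_{n}(r)dr$. *)

theory Defs
  imports "HOL-Analysis.Analysis"
begin

text \<open>Backward recursion in k = M - n. Gaux g M k t th is G_{M-k}(t,th,M).\<close>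
fun Gaux :: "(nat \<Rightarrow> real \<Rightarrow> real) \<Rightarrow> nat \<Rightarrow> nat \<Rightarrow> real \<Rightarrow> real \<Rightarrow> real" where
  "Gaux g M 0 t th = th"
| "Gaux g M (Suc k) t th =
     th + integral {0..t} (\<lambda>s. (exp (Gaux g M k (t - s) th) - 1) * g (M - Suc k) s)"

text \<open>G g n t th M = G_n(t,th,M) for n \<le> M (value for n > M is irrelevant).\<close>
definition G :: "(nat \<Rightarrow> real \<Rightarrow> real) \<Rightarrow> nat \<Rightarrow> real \<Rightarrow> real \<Rightarrow> nat \<Rightarrow> real" where
  "G g n t th M = Gaux g M (M - n) t th"

fun C1aux :: "(nat \<Rightarrow> real \<Rightarrow> real) \<Rightarrow> nat \<Rightarrow> nat \<Rightarrow> real \<Rightarrow> real" where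
  "C1aux g M 0 s = 1"
| "C1aux g M (Suc k) s = 1 + integral {0..s} (\<lambda>r. C1aux g M k (s - r) * g (M - Suc k) r)"

fun C2aux :: "(nat \<Rightarrow> real \<Rightarrow> real) \<Rightarrow> nat \<Rightarrow> nat \<Rightarrow> real \<Rightarrow> real" where
  "C2aux g M 0 s = 0"
| "C2aux g M (Suc k) s = integral {0..s}
     (\<lambda>r. (C2aux g M k (s - r) + (1/2) * (C1aux g M k (s - r))^2) * g (M - Suc k) r)"

definition C1 :: "(nat \<Rightarrow> real \<Rightarrow> real) \<Rightarrow> nat \<Rightarrow> real \<Rightarrow> nat \<Rightarrow> real" where
  "C1 g n s M = C1aux g M (M - n) s"

definition C2 :: "(nat \<Rightarrow> real \<Rightarrow> real) \<Rightarrow> nat \<Rightarrow> real \<Rightarrow> nat \<Rightarrow> real" where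
  "C2 g n s M = C2aux g M (M - n) s"

end

theory Submission
  imports Defs
begin



lemma gamma_int_sub:
  fixes \<gamma> :: "real \<Rightarrow> real"
  assumes "\<gamma> integrable_on {0..}" "\<forall>t\<ge>0. \<gamma> t \<ge> 0"
  shows "\<gamma> integrable_on {0..s}" "\<gamma> absolutely_integrable_on {0..s}"
        "integral {0..s} \<gamma> \<le> integral {0..} \<gamma>"
proof -
  show 1: "\<gamma> integrable_on {0..s}"
    by (rule integrable_on_subinterval[OF assms(1)]) auto
  show "\<gamma> absolutely_integrable_on {0..s}"
    by (rule nonnegative_absolutely_integrable_1[OF 1]) (use assms in auto)
  show "integral {0..s} \<gamma> \<le> integral {0..} \<gamma>"
    by (rule integral_subset_le[OF _ 1 assms(1)]) (use assms in auto)
qed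

lemma conv_int_mono:
  fixes f \<gamma> :: "real \<Rightarrow> real"
  assumes mono: "mono_on {0..} f" and gi: "\<gamma> integrable_on {0..}"
    and gn: "\<forall>t\<ge>0. \<gamma> t \<ge> 0" and s: "s \<ge> 0"
  shows "(\<lambda>r. f (s - r) * \<gamma> r) integrable_on {0..s}"
proof -
  define h where "h r = f (s - max 0 (min s r))" for r
  have "mono (\<lambda>r. - h r)"
  proof (rule monoI)
    fix r r' :: real assume "r \<le> r'"
    hence "f (s - max 0 (min s r')) \<le> f (s - max 0 (min s r))"
      using s by (intro mono_onD[OF mono]) auto
    thus "- h r \<le> - h r'" by (simp add: h_def)
  qed
  hence "(\<lambda>r. - h r) \<in> borel_measurable borel" by (rule borel_measurable_mono)
  hence "(\<lambda>r. - (- h r)) \<in> borel_measurable borel" by measurable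
  hence hm: "h \<in> borel_measurable (lebesgue_on {0..s})"
    by (simp add: measurable_completion measurable_restrict_space1)
  have "bounded (h ` {0..s})"
  proof (rule boundedI)
    fix y assume "y \<in> h ` {0..s}"
    then obtain r where r: "r \<in> {0..s}" "y = h r" by auto
    have "f 0 \<le> h r" "h r \<le> f s" unfolding h_def
      using s r by (auto intro!: mono_onD[OF mono])
    thus "norm y \<le> \<bar>f 0\<bar> + \<bar>f s\<bar>" using r by auto
  qed
  hence "(\<lambda>r. h r * \<gamma> r) absolutely_integrable_on {0..s}"
    using absolutely_integrable_bounded_measurable_product_real[OF hm _ _ gamma_int_sub(2)[OF gi gn]]
    by auto
  hence "(\<lambda>r. h r * \<gamma> r) integrable_on {0..s}" by (rule set_lebesgue_integral_eq_integral(1))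
  thus ?thesis by (rule integrable_eq) (auto simp: h_def)
qed

lemma conv_int:
  fixes f \<gamma> :: "real \<Rightarrow> real"
  assumes mono: "mono_on {0..} f \<or> mono_on {0..} (\<lambda>u. - f u)" and gi: "\<gamma> integrable_on {0..}"
    and gn: "\<forall>t\<ge>0. \<gamma> t \<ge> 0" and s: "s \<ge> 0"
  shows "(\<lambda>r. f (s - r) * \<gamma> r) integrable_on {0..s}"
  using mono
proof
  assume "mono_on {0..} f" thus ?thesis using conv_int_mono gi gn s by blast
next
  assume "mono_on {0..} (\<lambda>u. - f u)"
  hence "(\<lambda>r. (\<lambda>u. - f u) (s - r) * \<gamma> r) integrable_on {0..s}" using conv_int_mono gi gn s by blast
  hence "(\<lambda>r. - ((\<lambda>u. - f u) (s - r) * \<gamma> r)) integrable_on {0..s}" by (rule integrable_neg)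
  thus ?thesis by simp
qed

lemma conv_mono:
  fixes F \<gamma> :: "real \<Rightarrow> real"
  assumes mono: "mono_on {0..} F" and Fn: "\<forall>u\<ge>0. F u \<ge> 0"
    and gi: "\<gamma> integrable_on {0..}" and gn: "\<forall>t\<ge>0. \<gamma> t \<ge> 0"
  shows "mono_on {0..} (\<lambda>s. integral {0..s} (\<lambda>r. F (s - r) * \<gamma> r))"
    "\<And>s. s \<ge> 0 \<Longrightarrow> integral {0..s} (\<lambda>r. F (s - r) * \<gamma> r) \<ge> 0"
proof -
  show "\<And>s. s \<ge> 0 \<Longrightarrow> integral {0..s} (\<lambda>r. F (s - r) * \<gamma> r) \<ge> 0"
    by (rule integral_nonneg[OF conv_int_mono[OF mono gi gn]]) (auto simp: Fn gn)
  show "mono_on {0..} (\<lambda>s. integral {0..s} (\<lambda>r. F (s - r) * \<gamma> r))"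
  proof (rule mono_onI)
    fix s s' :: real assume ss: "s \<in> {0..}" "s' \<in> {0..}" "s \<le> s'"
    have i1: "(\<lambda>r. F (s - r) * \<gamma> r) integrable_on {0..s}"
      using conv_int_mono[OF mono gi gn] ss by auto
    have i2: "(\<lambda>r. F (s' - r) * \<gamma> r) integrable_on {0..s'}"
      using conv_int_mono[OF mono gi gn] ss by auto
    have i3: "(\<lambda>r. F (s' - r) * \<gamma> r) integrable_on {0..s}"
      by (rule integrable_on_subinterval[OF i2]) (use ss in auto)
    have "integral {0..s} (\<lambda>r. F (s - r) * \<gamma> r) \<le> integral {0..s} (\<lambda>r. F (s' - r) * \<gamma> r)"
      by (rule integral_le[OF i1 i3]) (use ss in \<open>auto intro!: mult_right_mono mono_onD[OF mono] simp: gn\<close>)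
    also have "\<dots> \<le> integral {0..s'} (\<lambda>r. F (s' - r) * \<gamma> r)"
      by (rule integral_subset_le[OF _ i3 i2]) (use ss in \<open>auto simp: Fn gn\<close>)
    finally show "integral {0..s} (\<lambda>r. F (s - r) * \<gamma> r) \<le> integral {0..s'} (\<lambda>r. F (s' - r) * \<gamma> r)" .
  qed
qed

lemma conv_bound_int:
  fixes F \<gamma> :: "real \<Rightarrow> real"
  assumes int: "(\<lambda>r. F (s - r) * \<gamma> r) integrable_on {0..s}" and Fb: "\<forall>u. 0 \<le> u \<and> u \<le> s \<longrightarrow> \<bar>F u\<bar> \<le> B"
    and gi: "\<gamma> integrable_on {0..}" and gn: "\<forall>t\<ge>0. \<gamma> t \<ge> 0" and s: "s \<ge> 0"
    and B: "B \<ge> 0" and R: "integral {0..} \<gamma> \<le> R"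
  shows "\<bar>integral {0..s} (\<lambda>r. F (s - r) * \<gamma> r)\<bar> \<le> B * R"
proof -
  have "\<bar>integral {0..s} (\<lambda>r. F (s - r) * \<gamma> r)\<bar> \<le> integral {0..s} (\<lambda>r. B * \<gamma> r)"
  proof -
    have "\<And>x. 0 \<le> x \<and> x \<le> s \<Longrightarrow> \<bar>F (s - x)\<bar> * \<bar>\<gamma> x\<bar> \<le> B * \<gamma> x"
      by (simp add: gn) (rule mult_right_mono, auto simp: Fb gn)
    thus ?thesis
      using integral_norm_bound_integral[OF int integrable_cmul[OF gamma_int_sub(1)[OF gi gn], of B]]
      by (simp add: abs_mult)
  qed
  also have "\<dots> = B * integral {0..s} \<gamma>" by simp
  also have "\<dots> \<le> B * R" using gamma_int_sub(3)[OF gi gn, of s] R B by (auto intro!: mult_left_mono)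
  finally show ?thesis .
qed

lemma conv_bound:
  fixes F \<gamma> :: "real \<Rightarrow> real"
  assumes mono: "mono_on {0..} F \<or> mono_on {0..} (\<lambda>u. - F u)" and Fb: "\<forall>u. 0 \<le> u \<and> u \<le> s \<longrightarrow> \<bar>F u\<bar> \<le> B"
    and gi: "\<gamma> integrable_on {0..}" and gn: "\<forall>t\<ge>0. \<gamma> t \<ge> 0" and s: "s \<ge> 0"
    and B: "B \<ge> 0" and R: "integral {0..} \<gamma> \<le> R"
  shows "\<bar>integral {0..s} (\<lambda>r. F (s - r) * \<gamma> r)\<bar> \<le> B * R"
proof -
  have "\<bar>integral {0..s} (\<lambda>r. F (s - r) * \<gamma> r)\<bar> \<le> integral {0..s} (\<lambda>r. B * \<gamma> r)"
  proof -
    have "\<And>x. 0 \<le> x \<and> x \<le> s \<Longrightarrow> \<bar>F (s - x)\<bar> * \<bar>\<gamma> x\<bar> \<le> B * \<gamma> x"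
      by (simp add: gn) (rule mult_right_mono, auto simp: Fb gn)
    thus ?thesis
      using integral_norm_bound_integral[OF conv_int[OF mono gi gn s] integrable_cmul[OF gamma_int_sub(1)[OF gi gn], of B]]
      by (simp add: abs_mult)
  qed
  also have "\<dots> = B * integral {0..s} \<gamma>" by simp
  also have "\<dots> \<le> B * R" using gamma_int_sub(3)[OF gi gn, of s] R B by (auto intro!: mult_left_mono)
  finally show ?thesis .
qed



lemma exp_taylor3:
  fixes y :: real assumes "\<bar>y\<bar> \<le> 1"
  shows "\<bar>exp y - 1 - y - y^2/2\<bar> \<le> \<bar>y\<bar>^3"
proof -
  obtain t where t: "\<bar>t\<bar> \<le> \<bar>y\<bar>" "exp y = (\<Sum>m<3. (y ^ m) / fact m) + (exp t / fact 3) * y ^ 3"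
    using Maclaurin_exp_le[of y 3] by blast
  have s: "(\<Sum>m<3. (y ^ m) / fact m) = 1 + y + y^2/2"
    by (simp add: numeral_3_eq_3 fact_numeral power2_eq_square)
  have "exp t \<le> exp 1" using t assms by simp
  hence et: "exp t \<le> 6" using exp_le by linarith
  have "\<bar>exp y - 1 - y - y^2/2\<bar> = exp t / 6 * \<bar>y\<bar>^3"
    using t s by (simp add: fact_numeral abs_mult power_abs)
  also have "\<dots> \<le> 1 * \<bar>y\<bar>^3" using et by (intro mult_right_mono) auto
  finally show ?thesis by simp
qed

lemma pointwise:
  fixes g c1 c2 x K1 K2 R cm :: real
  assumes gb: "\<bar>g\<bar> \<le> K1*\<bar>x\<bar>" and small: "K1*\<bar>x\<bar> \<le> (1-R)/4" and R0: "0 \<le> R" and R1: "R < 1"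
    and K1: "K1 \<ge> 1/(1-R)" and c1: "0 \<le> c1" "c1 \<le> 1/(1-R)" and c2: "0 \<le> c2" "c2 \<le> cm"
    and e: "\<bar>g - c1*x - c2*x^2\<bar> \<le> K2*\<bar>x\<bar>^3" and K2: "K2 \<ge> 0"
  shows "\<bar>exp g - 1 - c1*x - (c2 + 1/2*c1^2)*x^2\<bar>
     \<le> K2*\<bar>x\<bar>^3*(1+(1-R)/4) + (K1^3 + 1/2*cm*(K1+1/(1-R)))*\<bar>x\<bar>^3"
proof -
  define e where "e = g - c1*x - c2*x^2"
  define L where "L = K1 + 1/(1-R)"
  have pos: "1/(1-R) > 0" using R1 by simp
  have K1p: "K1 > 0" using K1 pos by linarith
  have "(1-R)/4 \<le> 1" using R0 by simp
  hence g1: "\<bar>g\<bar> \<le> 1" using gb small by linarith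
  have id: "exp g - 1 - c1*x - (c2 + 1/2*c1^2)*x^2 = (exp g - 1 - g - g^2/2) + e + 1/2*((e + c2*x^2)*(g + c1*x))"
    unfolding e_def by (simp add: algebra_simps power2_eq_square)
  have t1: "\<bar>exp g - 1 - g - g^2/2\<bar> \<le> K1^3*\<bar>x\<bar>^3"
  proof -
    have "\<bar>g\<bar>^3 \<le> (K1*\<bar>x\<bar>)^3" by (rule power_mono[OF gb]) simp
    thus ?thesis using exp_taylor3[OF g1] by (simp add: power_mult_distrib)
  qed
  have t2: "\<bar>e + c2*x^2\<bar> \<le> K2*\<bar>x\<bar>^3 + cm*\<bar>x\<bar>^2"
  proof -
    have "c2*x^2 \<le> cm*\<bar>x\<bar>^2" using c2 by (simp add: mult_right_mono)
    moreover have nn: "0 \<le> c2*x^2" using c2 by simp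
    moreover have "\<bar>e + c2*x^2\<bar> \<le> \<bar>e\<bar> + c2*x^2" using nn abs_triangle_ineq[of e "c2*x^2"] by simp
    moreover have "\<bar>e\<bar> \<le> K2*\<bar>x\<bar>^3" using e by (simp add: e_def)
    ultimately show ?thesis by simp
  qed
  have t3: "\<bar>g + c1*x\<bar> \<le> L*\<bar>x\<bar>"
  proof -
    have "\<bar>c1*x\<bar> \<le> 1/(1-R)*\<bar>x\<bar>" unfolding abs_mult using c1 by (intro mult_right_mono) auto
    moreover have "\<bar>g + c1*x\<bar> \<le> \<bar>g\<bar> + \<bar>c1*x\<bar>" by (rule abs_triangle_ineq)
    ultimately show ?thesis using gb unfolding L_def distrib_right by linarith
  qed
  have t4: "1/2*\<bar>(e + c2*x^2)*(g + c1*x)\<bar> \<le> 1/2*((K2*\<bar>x\<bar>^3 + cm*\<bar>x\<bar>^2)*(L*\<bar>x\<bar>))"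
    unfolding abs_mult using K2 c2 by (intro mult_left_mono mult_mono t2 t3) auto
  have hL: "1/2*L*\<bar>x\<bar> \<le> (1-R)/4"
  proof -
    have "1/2*L \<le> K1" unfolding L_def using K1 by simp
    hence "1/2*L*\<bar>x\<bar> \<le> K1*\<bar>x\<bar>" by (rule mult_right_mono) simp
    thus ?thesis using small by linarith
  qed
  have t5: "1/2*((K2*\<bar>x\<bar>^3 + cm*\<bar>x\<bar>^2)*(L*\<bar>x\<bar>)) = K2*\<bar>x\<bar>^3*(1/2*L*\<bar>x\<bar>) + 1/2*cm*L*\<bar>x\<bar>^3"
    by (simp add: algebra_simps power2_eq_square power3_eq_cube)
  have t6: "K2*\<bar>x\<bar>^3*(1/2*L*\<bar>x\<bar>) \<le> K2*\<bar>x\<bar>^3*((1-R)/4)"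
    using hL K2 by (intro mult_left_mono) auto
  have "\<bar>exp g - 1 - c1*x - (c2 + 1/2*c1^2)*x^2\<bar> \<le> \<bar>exp g - 1 - g - g^2/2\<bar> + \<bar>e\<bar> + 1/2*\<bar>(e + c2*x^2)*(g + c1*x)\<bar>"
  proof -
    let ?A = "exp g - 1 - g - g^2/2" and ?P = "(e + c2*x^2)*(g + c1*x)"
    have "\<bar>?A + e + 1/2*?P\<bar> \<le> \<bar>?A + e\<bar> + \<bar>1/2*?P\<bar>" by (rule abs_triangle_ineq)
    moreover have "\<bar>?A + e\<bar> \<le> \<bar>?A\<bar> + \<bar>e\<bar>" by (rule abs_triangle_ineq)
    moreover have "\<bar>1/2*?P\<bar> = 1/2*\<bar>?P\<bar>" by (simp add: abs_mult)
    ultimately show ?thesis unfolding id by linarith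
  qed
  also have "\<dots> \<le> K1^3*\<bar>x\<bar>^3 + K2*\<bar>x\<bar>^3 + (K2*\<bar>x\<bar>^3*((1-R)/4) + 1/2*cm*L*\<bar>x\<bar>^3)"
    using t1 t4 t5 t6 e unfolding e_def by linarith
  also have "\<dots> = K2*\<bar>x\<bar>^3*(1+(1-R)/4) + (K1^3 + 1/2*cm*(K1+1/(1-R)))*\<bar>x\<bar>^3"
    unfolding L_def by (simp add: algebra_simps)
  finally show ?thesis .
qed

context
  fixes g :: "nat \<Rightarrow> real \<Rightarrow> real" and R :: real
  assumes gn: "\<And>n t. t \<ge> 0 \<Longrightarrow> g n t \<ge> 0" and gi: "\<And>n. g n integrable_on {0..}"
    and gR: "\<And>n. integral {0..} (g n) \<le> R" and R0: "0 \<le> R" and R1: "R < 1"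
begin

lemma C1_props: "mono_on {0..} (C1aux g M k) \<and> (\<forall>s\<ge>0. 1 \<le> C1aux g M k s \<and> C1aux g M k s \<le> 1/(1-R))"
proof (induction k)
  case 0
  have "1 \<le> 1/(1-R)" using R0 R1 by simp
  then show ?case by (simp add: mono_on_def)
next
  case (Suc k)
  let ?F = "C1aux g M k" and ?n = "M - Suc k"
  have Fm: "mono_on {0..} ?F" and Fb: "\<And>u. u \<ge> 0 \<Longrightarrow> 1 \<le> ?F u \<and> ?F u \<le> 1/(1-R)" using Suc by auto
  have Fn: "\<forall>u\<ge>0. ?F u \<ge> 0" using Fb by fastforce
  have gnn: "\<forall>t\<ge>0. g ?n t \<ge> 0" using gn by auto
  note cm = conv_mono[where F="?F" and \<gamma>="g ?n", OF Fm Fn gi[of ?n] gnn]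
  have m: "mono_on {0..} (C1aux g M (Suc k))"
    using cm(1) by (auto simp: mono_on_def)
  have "\<forall>s\<ge>0. 1 \<le> C1aux g M (Suc k) s \<and> C1aux g M (Suc k) s \<le> 1/(1-R)"
  proof (intro allI impI)
    fix s :: real assume s: "s \<ge> 0"
    have b: "\<bar>integral {0..s} (\<lambda>r. ?F (s - r) * g ?n r)\<bar> \<le> 1/(1-R) * R"
    proof (rule conv_bound[where F="?F" and \<gamma>="g ?n", OF disjI1[OF Fm] _ gi[of ?n] gnn s _ gR[of ?n]])
      show "\<forall>u. 0 \<le> u \<and> u \<le> s \<longrightarrow> \<bar>?F u\<bar> \<le> 1/(1-R)"
      proof (intro allI impI)
        fix u :: real assume "0 \<le> u \<and> u \<le> s"
        hence "1 \<le> ?F u" "?F u \<le> 1/(1-R)" using Fb by auto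
        thus "\<bar>?F u\<bar> \<le> 1/(1-R)" by simp
      qed
    qed (use R1 in \<open>intro divide_nonneg_nonneg, auto\<close>)
    have "1 + 1/(1-R)*R = 1/(1-R)" using R1 by (simp add: field_simps)
    thus "1 \<le> C1aux g M (Suc k) s \<and> C1aux g M (Suc k) s \<le> 1/(1-R)"
      using b cm(2)[OF s] by simp
  qed
  with m show ?case by blast
qed

lemma C2_props: "mono_on {0..} (C2aux g M k) \<and> (\<forall>s\<ge>0. 0 \<le> C2aux g M k s \<and> C2aux g M k s \<le> R/(2*(1-R)^3))"
proof (induction k)
  case 0
  then show ?case using R0 R1 by (simp add: mono_on_def)
next
  case (Suc k)
  let ?F = "\<lambda>u. C2aux g M k u + 1/2 * (C1aux g M k u)^2" and ?n = "M - Suc k"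
  have C1: "mono_on {0..} (C1aux g M k)" "\<And>u. u \<ge> 0 \<Longrightarrow> 1 \<le> C1aux g M k u \<and> C1aux g M k u \<le> 1/(1-R)"
    using C1_props by auto
  have C2: "mono_on {0..} (C2aux g M k)" "\<And>u. u \<ge> 0 \<Longrightarrow> 0 \<le> C2aux g M k u \<and> C2aux g M k u \<le> R/(2*(1-R)^3)"
    using Suc by auto
  have Fm: "mono_on {0..} ?F"
  proof (rule mono_onI)
    fix r s :: real assume rs: "r \<in> {0..}" "s \<in> {0..}" "r \<le> s"
    have "C1aux g M k r \<le> C1aux g M k s" using mono_onD[OF C1(1) rs] .
    moreover have "0 \<le> C1aux g M k r" using C1(2)[of r] rs by auto
    ultimately have "(C1aux g M k r)^2 \<le> (C1aux g M k s)^2" by (rule power_mono)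
    moreover have "C2aux g M k r \<le> C2aux g M k s" using mono_onD[OF C2(1) rs] .
    ultimately show "?F r \<le> ?F s" by simp
  qed
  have Fn: "\<forall>u\<ge>0. ?F u \<ge> 0" using C2(2) by (simp add: add_nonneg_nonneg)
  have gnn: "\<forall>t\<ge>0. g ?n t \<ge> 0" using gn by auto
  note cm = conv_mono[where F="?F" and \<gamma>="g ?n", OF Fm Fn gi[of ?n] gnn]
  have m: "mono_on {0..} (C2aux g M (Suc k))"
    using cm(1) by (auto simp: mono_on_def)
  have "\<forall>s\<ge>0. 0 \<le> C2aux g M (Suc k) s \<and> C2aux g M (Suc k) s \<le> R/(2*(1-R)^3)"
  proof (intro allI impI)
    fix s :: real assume s: "s \<ge> 0"
    define B where "B = R/(2*(1-R)^3) + 1/2*(1/(1-R))^2"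
    have Bb: "\<And>u. 0 \<le> u \<Longrightarrow> \<bar>?F u\<bar> \<le> B"
    proof -
      fix u :: real assume u: "0 \<le> u"
      have "(C1aux g M k u)^2 \<le> (1/(1-R))^2" using C1(2)[OF u] by (intro power_mono) auto
      thus "\<bar>?F u\<bar> \<le> B" using C2(2)[OF u] Fn[rule_format, OF u] unfolding B_def by simp
    qed
    have B0: "B \<ge> 0" using Bb[of 0] by auto
    have b: "\<bar>integral {0..s} (\<lambda>r. ?F (s - r) * g ?n r)\<bar> \<le> B * R"
      by (rule conv_bound[where F="?F" and \<gamma>="g ?n", OF disjI1[OF Fm] _ gi[of ?n] gnn s B0 gR[of ?n]]) (use Bb in simp)
    have "B = 1/(2*(1-R)^3)"
    proof -
      define d where "d = 1 - R"
      have d: "d > 0" "R = 1 - d" using R1 by (auto simp: d_def)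
      show ?thesis unfolding B_def d_def[symmetric] using d by (simp add: field_simps power3_eq_cube power2_eq_square)
    qed
    hence "B * R = R/(2*(1-R)^3)" by simp
    thus "0 \<le> C2aux g M (Suc k) s \<and> C2aux g M (Suc k) s \<le> R/(2*(1-R)^3)"
      using b cm(2)[OF s] by simp
  qed
  with m show ?case by blast
qed

lemma G_props: "(0 \<le> x \<longrightarrow> mono_on {0..} (\<lambda>u. Gaux g M k u x) \<and> (\<forall>s\<ge>0. x \<le> Gaux g M k s x))
   \<and> (x \<le> 0 \<longrightarrow> mono_on {0..} (\<lambda>u. - Gaux g M k u x) \<and> (\<forall>s\<ge>0. Gaux g M k s x \<le> x))"
proof (induction k)
  case 0
  then show ?case by (simp add: mono_on_def)
next
  case (Suc k)
  let ?n = "M - Suc k"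
  have A: "mono_on {0..} (\<lambda>u. Gaux g M (Suc k) u x) \<and> (\<forall>s\<ge>0. x \<le> Gaux g M (Suc k) s x)" if x: "0 \<le> x"
  proof -
    let ?F = "\<lambda>u. exp (Gaux g M k u x) - 1"
    have Gm: "mono_on {0..} (\<lambda>u. Gaux g M k u x)" and Gb: "\<And>u. u \<ge> 0 \<Longrightarrow> x \<le> Gaux g M k u x"
      using Suc x by auto
    have Fm: "mono_on {0..} ?F" using mono_onD[OF Gm] by (auto intro!: mono_onI)
    have Fn: "\<forall>u\<ge>0. ?F u \<ge> 0" using Gb x by fastforce
    have gnn: "\<forall>t\<ge>0. g ?n t \<ge> 0" using gn by auto
  note cm = conv_mono[where F="?F" and \<gamma>="g ?n", OF Fm Fn gi[of ?n] gnn]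
    show ?thesis using cm by (auto simp: mono_on_def)
  qed
  have B: "mono_on {0..} (\<lambda>u. - Gaux g M (Suc k) u x) \<and> (\<forall>s\<ge>0. Gaux g M (Suc k) s x \<le> x)" if x: "x \<le> 0"
  proof -
    let ?F = "\<lambda>u. 1 - exp (Gaux g M k u x)"
    have Gm: "mono_on {0..} (\<lambda>u. - Gaux g M k u x)" and Gb: "\<And>u. u \<ge> 0 \<Longrightarrow> Gaux g M k u x \<le> x"
      using Suc x by auto
    have Fm: "mono_on {0..} ?F" using mono_onD[OF Gm] by (auto intro!: mono_onI)
    have Fn: "\<forall>u\<ge>0. ?F u \<ge> 0" using Gb x by fastforce
    have gnn: "\<forall>t\<ge>0. g ?n t \<ge> 0" using gn by auto
  note cm = conv_mono[where F="?F" and \<gamma>="g ?n", OF Fm Fn gi[of ?n] gnn]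
    have eq: "\<And>s. integral {0..s} (\<lambda>r. (exp (Gaux g M k (s - r) x) - 1) * g ?n r)
        = - integral {0..s} (\<lambda>r. ?F (s - r) * g ?n r)"
      by (subst integral_neg[symmetric]) (simp add: algebra_simps)
    show ?thesis using cm by (auto simp: mono_on_def eq)
  qed
  show ?case using A B by blast
qed

lemma G_mono_either:
  "mono_on {0..} (\<lambda>u. Gaux g M k u x) \<or> mono_on {0..} (\<lambda>u. - Gaux g M k u x)"
  "mono_on {0..} (\<lambda>u. exp (Gaux g M k u x) - 1) \<or> mono_on {0..} (\<lambda>u. - (exp (Gaux g M k u x) - 1))"
proof -
  show "mono_on {0..} (\<lambda>u. Gaux g M k u x) \<or> mono_on {0..} (\<lambda>u. - Gaux g M k u x)"
    using G_props[of x M k] by linarith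
  show "mono_on {0..} (\<lambda>u. exp (Gaux g M k u x) - 1) \<or> mono_on {0..} (\<lambda>u. - (exp (Gaux g M k u x) - 1))"
  proof (cases "0 \<le> x")
    case True
    hence Gm: "mono_on {0..} (\<lambda>u. Gaux g M k u x)" using G_props[of x M k] by blast
    have "mono_on {0..} (\<lambda>u. exp (Gaux g M k u x) - 1)" using mono_onD[OF Gm] by (auto intro!: mono_onI)
    thus ?thesis by blast
  next
    case False
    hence Gm: "mono_on {0..} (\<lambda>u. - Gaux g M k u x)" using G_props[of x M k] by auto
    have "mono_on {0..} (\<lambda>u. - (exp (Gaux g M k u x) - 1))" using mono_onD[OF Gm] by (auto intro!: mono_onI)
    thus ?thesis by blast
  qed
qed


lemma F2_mono: "mono_on {0..} (\<lambda>u. C2aux g M k u + 1/2 * (C1aux g M k u)^2)"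
proof (rule mono_onI)
  fix r s :: real assume rs: "r \<in> {0..}" "s \<in> {0..}" "r \<le> s"
  have C1: "mono_on {0..} (C1aux g M k)" "\<And>u. u \<ge> 0 \<Longrightarrow> 1 \<le> C1aux g M k u"
    using C1_props by auto
  have C2: "mono_on {0..} (C2aux g M k)" using C2_props by auto
  have "C1aux g M k r \<le> C1aux g M k s" using mono_onD[OF C1(1) rs] .
  moreover have "0 \<le> C1aux g M k r" using C1(2)[of r] rs by auto
  ultimately have "(C1aux g M k r)^2 \<le> (C1aux g M k s)^2" by (rule power_mono)
  moreover have "C2aux g M k r \<le> C2aux g M k s" using mono_onD[OF C2 rs] .
  ultimately show "C2aux g M k r + 1/2 * (C1aux g M k r)^2 \<le> C2aux g M k s + 1/2 * (C1aux g M k s)^2" by simp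
qed

lemma err_bound:
  fixes x K1 K2 :: real and M :: nat
  assumes Gb: "\<forall>k<M. \<forall>s\<ge>0. \<bar>Gaux g M k s x\<bar> \<le> K1*\<bar>x\<bar>"
    and K1: "K1 \<ge> 1/(1-R)" and small: "K1*\<bar>x\<bar> \<le> (1-R)/4"
    and K2: "K2 = 4*(R/(2*(1-R)^3)*(K1 + 1/(1-R)) + R*K1^3)/((4-R)*(1-R))"
  shows "\<forall>k<M. \<forall>s\<ge>0. \<bar>Gaux g M k s x - C1aux g M k s * x - C2aux g M k s * x^2\<bar> \<le> K2*\<bar>x\<bar>^3"
proof -
  define cm where "cm = R/(2*(1-R)^3)"
  define L where "L = K1 + 1/(1-R)"
  define D where "D = K1^3 + 1/2*cm*(K1+1/(1-R))"
  have d1: "1 - R > 0" using R1 by simp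
  have p1: "1/(1-R) > 0" using d1 by simp
  have K1p: "K1 > 0" using K1 p1 by linarith
  have cm0: "cm \<ge> 0" unfolding cm_def using R0 d1 by simp
  have L0: "L \<ge> 0" unfolding L_def using K1p p1 by simp
  have nz: "(4-R)*(1-R) \<noteq> 0" using R1 by simp
  have K2': "K2 = 4*(cm*L + R*K1^3)/((4-R)*(1-R))" unfolding K2 cm_def L_def by simp
  have K2e: "K2*((4-R)*(1-R)/4) = cm*L + R*K1^3"
  proof -
    have "\<And>N P::real. P \<noteq> 0 \<Longrightarrow> 4*N/P*(P/4) = N" by simp
    thus ?thesis unfolding K2' using nz by blast
  qed
  have K2nn: "K2 \<ge> 0" unfolding K2 using R0 R1 K1p d1 by (intro divide_nonneg_nonneg mult_nonneg_nonneg add_nonneg_nonneg) auto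
  have h2: "K2 - R*(K2*(1+(1-R)/4)) = K2*((4-R)*(1-R)/4)" by (simp add: field_simps)
  have h3: "R*D = R*K1^3 + R*(1/2*(cm*L))" unfolding D_def L_def by (simp add: algebra_simps)
  have cl: "cm*L \<ge> 0" using cm0 L0 by simp
  have "R*(1/2*(cm*L)) = (R/2)*(cm*L)" by simp
  also have "\<dots> \<le> 1*(cm*L)" by (rule mult_right_mono) (use R1 cl in auto)
  finally have h4: "R*(1/2*(cm*L)) \<le> cm*L" by simp
  have key: "R*(K2*(1+(1-R)/4)) + R*D \<le> K2" using h2 h3 h4 K2e by linarith
  have "k < M \<Longrightarrow> \<forall>s\<ge>0. \<bar>Gaux g M k s x - C1aux g M k s * x - C2aux g M k s * x^2\<bar> \<le> K2*\<bar>x\<bar>^3" for k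
  proof (induction k)
    case 0 then show ?case using K2nn by simp
  next
    case (Suc k)
    let ?n = "M - Suc k"
    have IH: "\<And>u. u \<ge> 0 \<Longrightarrow> \<bar>Gaux g M k u x - C1aux g M k u * x - C2aux g M k u * x^2\<bar> \<le> K2*\<bar>x\<bar>^3"
      using Suc by auto
    have gnn: "\<forall>t\<ge>0. g ?n t \<ge> 0" using gn by auto
    show ?case
    proof (intro allI impI)
      fix s :: real assume s: "s \<ge> 0"
      let ?A = "\<lambda>r. (exp (Gaux g M k (s - r) x) - 1) * g ?n r"
      let ?B = "\<lambda>r. C1aux g M k (s - r) * g ?n r"
      let ?C = "\<lambda>r. (C2aux g M k (s - r) + 1/2 * (C1aux g M k (s - r))^2) * g ?n r"
      let ?I = "\<lambda>u. exp (Gaux g M k u x) - 1 - C1aux g M k u * x - (C2aux g M k u + 1/2 * (C1aux g M k u)^2) * x^2"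
      have iA: "?A integrable_on {0..s}"
        using conv_int[where f="\<lambda>u. exp (Gaux g M k u x) - 1" and \<gamma>="g ?n", OF G_mono_either(2) gi gnn s] by simp
      have iB: "?B integrable_on {0..s}"
        using conv_int[where f="C1aux g M k" and \<gamma>="g ?n", OF disjI1 gi gnn s] C1_props by blast
      have iC: "?C integrable_on {0..s}"
        using conv_int[where f="\<lambda>u. C2aux g M k u + 1/2 * (C1aux g M k u)^2" and \<gamma>="g ?n", OF disjI1[OF F2_mono] gi gnn s] by simp
      have iL: "(\<lambda>r. ?A r - x * ?B r - x^2 * ?C r) integrable_on {0..s}"
        by (intro integrable_diff iA integrable_on_mult_right iB iC)
      have iI: "(\<lambda>r. ?I (s - r) * g ?n r) integrable_on {0..s}"
        by (rule integrable_eq[OF iL]) (simp add: left_diff_distrib)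
      have "Gaux g M (Suc k) s x - C1aux g M (Suc k) s * x - C2aux g M (Suc k) s * x^2
          = integral {0..s} ?A - x * integral {0..s} ?B - x^2 * integral {0..s} ?C"
        by (simp only: Gaux.simps C1aux.simps C2aux.simps) (simp add: distrib_right)
      also have "\<dots> = integral {0..s} (\<lambda>r. ?A r - x * ?B r - x^2 * ?C r)"
        using iA iB iC by (simp add: integral_diff integrable_diff integrable_on_mult_right)
      also have "\<dots> = integral {0..s} (\<lambda>r. ?I (s - r) * g ?n r)"
        by (rule integral_cong) (simp add: left_diff_distrib)
      finally have eq: "Gaux g M (Suc k) s x - C1aux g M (Suc k) s * x - C2aux g M (Suc k) s * x^2
          = integral {0..s} (\<lambda>r. ?I (s - r) * g ?n r)" .
      define Bv where "Bv = K2*\<bar>x\<bar>^3*(1+(1-R)/4) + D*\<bar>x\<bar>^3"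
      have Bv0: "Bv \<ge> 0" unfolding Bv_def D_def using K2nn K1p cm0 p1 R1
        by (intro add_nonneg_nonneg mult_nonneg_nonneg) auto
      have Ib: "\<forall>u. 0 \<le> u \<and> u \<le> s \<longrightarrow> \<bar>?I u\<bar> \<le> Bv"
      proof (intro allI impI)
        fix u :: real assume u: "0 \<le> u \<and> u \<le> s"
        have c1: "1 \<le> C1aux g M k u" "C1aux g M k u \<le> 1/(1-R)" using C1_props u by auto
        have c2: "0 \<le> C2aux g M k u" "C2aux g M k u \<le> cm" using C2_props u unfolding cm_def by auto
        have gb: "\<bar>Gaux g M k u x\<bar> \<le> K1*\<bar>x\<bar>" using Gb Suc.prems u by auto
        show "\<bar>?I u\<bar> \<le> Bv" unfolding Bv_def D_def
          using pointwise[OF gb small R0 R1 K1 _ c1(2) c2 IH K2nn] c1 u by simp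
      qed
      have "\<bar>integral {0..s} (\<lambda>r. ?I (s - r) * g ?n r)\<bar> \<le> Bv * R"
        by (rule conv_bound_int[OF iI Ib gi gnn s Bv0 gR])
      also have "Bv * R = \<bar>x\<bar>^3 * (R*(K2*(1+(1-R)/4)) + R*D)" unfolding Bv_def by (simp add: algebra_simps)
      also have "\<dots> \<le> \<bar>x\<bar>^3 * K2" using key by (intro mult_left_mono) auto
      finally show "\<bar>Gaux g M (Suc k) s x - C1aux g M (Suc k) s * x - C2aux g M (Suc k) s * x^2\<bar> \<le> K2*\<bar>x\<bar>^3"
        using eq by (simp add: mult.commute)
    qed
  qed
  thus ?thesis by blast
qed

end


theorem lemma4p9:
  fixes \<gamma> :: "nat \<Rightarrow> real \<Rightarrow> real" and a :: "real \<Rightarrow> real"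
    and \<rho> \<theta> k1 k2 :: real
  assumes nonneg: "\<And>n t. t \<ge> 0 \<Longrightarrow> \<gamma> n t \<ge> 0"
    and integ: "\<And>n. \<gamma> n integrable_on {0..}"
    and bdd: "bdd_above (range (\<lambda>n. integral {0..} (\<gamma> n)))"
    and rho_def: "\<rho> = (SUP n. integral {0..} (\<gamma> n))"
    and rho_lt: "\<rho> < 1"
    and a_pos: "\<And>t. a t > 0"
    and a_lim: "((\<lambda>t. a t / t) \<longlongrightarrow> 0) at_top"
    and k1_ge: "k1 \<ge> 1 / (1 - \<rho>)"
    and k1_bound: "\<exists>T. \<forall>t\<ge>T. \<forall>M n s. 1 \<le> n \<and> n \<le> M \<and> s \<ge> 0 \<longrightarrow>
        \<bar>G \<gamma> n s (a t / t * \<theta>) M\<bar> \<le> k1 * (a t / t) * \<bar>\<theta>\<bar>"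
    and k2_def: "k2 = 4 * (\<rho> / (2 * (1 - \<rho>)^3) * (k1 + 1 / (1 - \<rho>)) + \<rho> * k1^3)
                      / ((4 - \<rho>) * (1 - \<rho>))"
  shows "\<exists>T. \<forall>t\<ge>T. k1 * (a t / t) * \<bar>\<theta>\<bar> \<le> (1 - \<rho>) / 4 \<longrightarrow>
        (\<forall>M n s. 1 \<le> n \<and> n \<le> M \<and> s \<ge> 0 \<longrightarrow>
          \<bar>G \<gamma> n s (a t / t * \<theta>) M - C1 \<gamma> n s M * (a t / t * \<theta>)
             - C2 \<gamma> n s M * (a t / t * \<theta>)^2\<bar> \<le> k2 * ((a t / t) * \<bar>\<theta>\<bar>)^3)"
proof -
  have R0: "0 \<le> \<rho>"
  proof -
    have "0 \<le> integral {0..} (\<gamma> 0)"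
      by (rule integral_nonneg[OF integ]) (use nonneg in auto)
    also have "\<dots> \<le> \<rho>" unfolding rho_def by (rule cSUP_upper[OF _ bdd]) simp
    finally show ?thesis .
  qed
  have gR: "\<And>n. integral {0..} (\<gamma> n) \<le> \<rho>" unfolding rho_def by (rule cSUP_upper[OF _ bdd]) simp
  obtain T0 where T0: "\<forall>t\<ge>T0. \<forall>M n s. 1 \<le> n \<and> n \<le> M \<and> s \<ge> 0 \<longrightarrow>
        \<bar>G \<gamma> n s (a t / t * \<theta>) M\<bar> \<le> k1 * (a t / t) * \<bar>\<theta>\<bar>" using k1_bound by blast
  show ?thesis
  proof (rule exI[of _ "max T0 1"], intro allI impI)
    fix t :: real and M n :: nat and s :: real
    assume t: "max T0 1 \<le> t" and sm: "k1 * (a t / t) * \<bar>\<theta>\<bar> \<le> (1 - \<rho>) / 4"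
      and nM: "1 \<le> n \<and> n \<le> M \<and> 0 \<le> s"
    define x where "x = a t / t * \<theta>"
    have pos: "a t / t > 0" using t a_pos[of t] by simp
    have ax: "\<bar>x\<bar> = a t / t * \<bar>\<theta>\<bar>" unfolding x_def by (simp only: abs_mult abs_of_pos[OF pos])
    have Gb: "\<forall>k<M. \<forall>s\<ge>0. \<bar>Gaux \<gamma> M k s x\<bar> \<le> k1*\<bar>x\<bar>"
    proof (intro allI impI)
      fix k :: nat and s :: real assume k: "k < M" and s: "0 \<le> s"
      have "\<bar>G \<gamma> (M - k) s x M\<bar> \<le> k1 * (a t / t) * \<bar>\<theta>\<bar>"
        using T0 t k s unfolding x_def by auto
      moreover have "M - (M - k) = k" using k by simp
      ultimately show "\<bar>Gaux \<gamma> M k s x\<bar> \<le> k1*\<bar>x\<bar>" unfolding G_def ax by (simp add: mult.assoc)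
    qed
    have small: "k1*\<bar>x\<bar> \<le> (1-\<rho>)/4" using sm unfolding ax by (simp add: mult.assoc)
    have E: "\<forall>k<M. \<forall>s\<ge>0. \<bar>Gaux \<gamma> M k s x - C1aux \<gamma> M k s * x - C2aux \<gamma> M k s * x^2\<bar> \<le> k2*\<bar>x\<bar>^3"
      by (rule err_bound[OF nonneg integ gR R0 rho_lt Gb k1_ge small k2_def])
    have "M - n < M" using nM by simp
    hence "\<bar>G \<gamma> n s x M - C1 \<gamma> n s M * x - C2 \<gamma> n s M * x^2\<bar> \<le> k2*\<bar>x\<bar>^3"
      using E nM unfolding G_def C1_def C2_def by blast
    thus "\<bar>G \<gamma> n s (a t / t * \<theta>) M - C1 \<gamma> n s M * (a t / t * \<theta>)
             - C2 \<gamma> n s M * (a t / t * \<theta>)^2\<bar> \<le> k2 * ((a t / t) * \<bar>\<theta>\<bar>)^3"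
      unfolding x_def[symmetric] ax .
  qed
qed

end
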